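(* Let $\mathcal B_1$ and $\mathcal B_2$ be real normed spaces, and let $U_1\subset\mathcal B_1$ and $U_2\subset\mathcal B_2$ be non-empty open subsets. Suppose that $\mathcal T:U_1\to U_2$ is a surjective isometry, i.e. $\|\mathcal T(u)-\mathcal T(v)\|=\|u-v\|$ for all $u,v\in U_1$ and $\mathcal T(U_1)=U_2$. If $f,g\in U_1$ satisfy $(1-r)f+rg\in U_1$ for every $r$ with $0\le r\le 1$, then \[ \mathcal T\left(\frac{f+g}{2}\right)=\frac{\mathcal T(f)+\mathcal T(g)}{2}. \]
   Context: No additional context is needed beyond the statement; $\mathcal T$ is not assumed to be linear or affine. *)

theory Defs
  imports "HOL-Analysis.Analysis"
begin

end

theory Submission
  imports Defs "HOL-Analysis.Analysis"
begin

lemma half_half[simp]: "(1/2::real) *\<^sub>R a + (1/2::real) *\<^sub>R a = (a::'a::real_vector)"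
  using scaleR_add_left[of "1/2::real" "1/2" a, symmetric] by simp

lemma local_mid:
  fixes T :: "'a::real_normed_vector \<Rightarrow> 'b::real_normed_vector"
  assumes iso: "\<forall>u\<in>U1. \<forall>v\<in>U1. norm (T u - T v) = norm (u - v)"
    and surj: "T ` U1 = U2"
    and zdef: "z = (1/2::real) *\<^sub>R (x + y)"
    and c1: "cball z (norm (x - y) / 2) \<subseteq> U1"
    and c2: "cball (T z) (norm (x - y)) \<subseteq> U2"
  shows "T z = (1/2::real) *\<^sub>R (T x + T y)"
proof -
  define d where "d = norm (x - y)"
  define S where "S = {u. norm (u - x) = d/2 \<and> norm (u - y) = d/2}"
  define S' where "S' = {w. norm (w - T x) = d/2 \<and> norm (w - T y) = d/2}"
  define \<psi> where "\<psi> = (\<lambda>u. x + y - u)"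
  define \<psi>' where "\<psi>' = (\<lambda>w. T x + T y - w)"
  have zx: "z - x = (1/2::real) *\<^sub>R (y - x)" and zy: "z - y = (1/2::real) *\<^sub>R (x - y)"
    using zdef by (auto simp: algebra_simps)
  have nzx: "norm (z - x) = d/2" unfolding zx d_def by (simp add: norm_minus_commute)
  have nzy: "norm (z - y) = d/2" unfolding zy d_def by simp
  have zS: "z \<in> S" using nzx nzy S_def by auto
  have xU: "x \<in> U1" using c1 nzx by (auto simp: d_def dist_norm norm_minus_commute)
  have yU: "y \<in> U1" using c1 nzy by (auto simp: d_def dist_norm norm_minus_commute)
  have SU: "S \<subseteq> U1"
  proof
    fix u assume u: "u \<in> S"
    have "z - u = (1/2::real) *\<^sub>R ((x - u) + (y - u))" using zdef by (auto simp: algebra_simps)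
    hence "norm (z - u) \<le> (1/2) * (norm (x - u) + norm (y - u))"
      by (simp add: norm_triangle_ineq)
    also have "\<dots> = d/2" using u S_def by (simp add: norm_minus_commute)
    finally show "u \<in> U1" using c1 by (auto simp: dist_norm d_def)
  qed
  have zU: "z \<in> U1" using zS SU by auto
  have S'U: "S' \<subseteq> U2"
  proof
    fix w assume w: "w \<in> S'"
    have "norm (T z - w) \<le> norm (T z - T x) + norm (T x - w)"
      using norm_triangle_ineq[of "T z - T x" "T x - w"] by simp
    also have "norm (T z - T x) = d/2" using iso zU xU nzx by auto
    also have "norm (T x - w) = d/2" using w S'_def by (simp add: norm_minus_commute)
    finally show "w \<in> U2" using c2 by (auto simp: dist_norm d_def)
  qed
  have TS: "u \<in> S \<Longrightarrow> T u \<in> S'" for u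
    using iso SU xU yU by (auto simp: S_def S'_def)
  have inj: "inj_on T U1"
    by (rule inj_onI) (metis iso norm_eq_zero right_minus_eq)
  define Ti where "Ti = inv_into U1 T"
  have Ti1: "w \<in> U2 \<Longrightarrow> Ti w \<in> U1 \<and> T (Ti w) = w" for w
    using surj by (auto simp: Ti_def inv_into_into f_inv_into_f)
  have Ti2: "u \<in> U1 \<Longrightarrow> Ti (T u) = u" for u
    using inj by (simp add: Ti_def)
  have TiS: "w \<in> S' \<Longrightarrow> Ti w \<in> S" for w
  proof -
    assume w: "w \<in> S'"
    then have a: "Ti w \<in> U1" "T (Ti w) = w" using Ti1 S'U by auto
    have "norm (Ti w - x) = norm (w - T x)" using iso a xU by metis
    moreover have "norm (Ti w - y) = norm (w - T y)" using iso a yU by metis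
    ultimately show ?thesis using w by (simp add: S_def S'_def)
  qed
  have psiS: "u \<in> S \<Longrightarrow> \<psi> u \<in> S" for u
    by (auto simp: S_def \<psi>_def norm_minus_commute algebra_simps)
  have psi'S: "w \<in> S' \<Longrightarrow> \<psi>' w \<in> S'" for w
    by (auto simp: S'_def \<psi>'_def norm_minus_commute algebra_simps)
  have psiiso: "norm (\<psi> u - \<psi> v) = norm (u - v)" for u v
    by (simp add: \<psi>_def norm_minus_commute algebra_simps)
  have psipsi: "\<psi> (\<psi> u) = u" for u by (simp add: \<psi>_def)
  have psiz: "\<psi> z = z" using zdef by (simp add: \<psi>_def algebra_simps scaleR_2[symmetric])
  have diam: "u \<in> S \<Longrightarrow> v \<in> S \<Longrightarrow> norm (u - v) \<le> d" for u v
    using norm_triangle_ineq[of "u - x" "x - v"] by (auto simp: S_def norm_minus_commute)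
  define \<phi> where "\<phi> = (\<lambda>u. Ti (\<psi>' (T u)))"
  define P where "P = (\<lambda>g h. (\<forall>u\<in>S. g u \<in> S \<and> h u \<in> S \<and> h (g u) = u \<and> g (h u) = u) \<and>
      (\<forall>u\<in>S. \<forall>v\<in>S. norm (g u - g v) = norm (u - v) \<and> norm (h u - h v) = norm (u - v)))"
  have phiS: "u \<in> S \<Longrightarrow> \<phi> u \<in> S" for u using TS psi'S TiS by (simp add: \<phi>_def)
  have phiphi: "u \<in> S \<Longrightarrow> \<phi> (\<phi> u) = u" for u
  proof -
    assume u: "u \<in> S"
    have "T (\<phi> u) = \<psi>' (T u)" unfolding \<phi>_def using Ti1 S'U TS psi'S u by blast
    then have "\<phi> (\<phi> u) = Ti (T u)" by (simp add: \<phi>_def \<psi>'_def)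
    then show ?thesis using Ti2 SU u by auto
  qed
  have phiiso: "u \<in> S \<Longrightarrow> v \<in> S \<Longrightarrow> norm (\<phi> u - \<phi> v) = norm (u - v)" for u v
  proof -
    assume u: "u \<in> S" and v: "v \<in> S"
    have "\<phi> u \<in> U1" "\<phi> v \<in> U1" using phiS u v SU by auto
    then have "norm (\<phi> u - \<phi> v) = norm (T (\<phi> u) - T (\<phi> v))"
      using iso by simp
    also have "T (\<phi> u) = \<psi>' (T u)" unfolding \<phi>_def using Ti1 S'U TS psi'S u by blast
    also have "T (\<phi> v) = \<psi>' (T v)" unfolding \<phi>_def using Ti1 S'U TS psi'S v by blast
    also have "norm (\<psi>' (T u) - \<psi>' (T v)) = norm (T u - T v)"
      by (simp add: \<psi>'_def norm_minus_commute algebra_simps)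
    also have "\<dots> = norm (u - v)" using iso u v SU by auto
    finally show ?thesis .
  qed
  have P0: "P \<phi> \<phi>" unfolding P_def using phiS phiphi phiiso by auto
  define c where "c = norm (\<phi> z - z)"
  have step: "P g h \<Longrightarrow> P (\<lambda>u. \<psi> (h (\<psi> (g u)))) (\<lambda>u. h (\<psi> (g (\<psi> u))))
     \<and> norm (\<psi> (h (\<psi> (g z))) - z) = 2 * norm (g z - z)" for g h
  proof -
    assume P: "P g h"
    have gS: "\<And>u. u \<in> S \<Longrightarrow> g u \<in> S" and hS: "\<And>u. u \<in> S \<Longrightarrow> h u \<in> S"
      and hg: "\<And>u. u \<in> S \<Longrightarrow> h (g u) = u" and gh: "\<And>u. u \<in> S \<Longrightarrow> g (h u) = u"
      and gi: "\<And>u v. u \<in> S \<Longrightarrow> v \<in> S \<Longrightarrow> norm (g u - g v) = norm (u - v)"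
      and hi: "\<And>u v. u \<in> S \<Longrightarrow> v \<in> S \<Longrightarrow> norm (h u - h v) = norm (u - v)"
      using P unfolding P_def by auto
    have A: "P (\<lambda>u. \<psi> (h (\<psi> (g u)))) (\<lambda>u. h (\<psi> (g (\<psi> u))))"
      unfolding P_def
      by (simp add: psiS psipsi psiiso gS hS hg gh gi hi)
    have "norm (\<psi> (h (\<psi> (g z))) - z) = norm (\<psi> (h (\<psi> (g z))) - \<psi> z)" by (simp add: psiz)
    also have "\<dots> = norm (h (\<psi> (g z)) - h (g z))" using psiiso P zS unfolding P_def by simp
    also have "\<dots> = norm (\<psi> (g z) - g z)"
    proof -
      have gz: "g z \<in> S" "\<psi> (g z) \<in> S" using P zS psiS unfolding P_def by auto
      have hi: "\<forall>u\<in>S. \<forall>v\<in>S. norm (h u - h v) = norm (u - v)" using P unfolding P_def by blast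
      show ?thesis using hi gz by blast
    qed
    also have "\<psi> (g z) - g z = 2 *\<^sub>R (z - g z)" using zdef
      by (simp add: \<psi>_def algebra_simps scaleR_2[symmetric])
    also have "norm (2 *\<^sub>R (z - g z)) = 2 * norm (g z - z)" by (simp add: norm_minus_commute)
    finally show ?thesis using A by simp
  qed
  have all: "\<exists>g h. P g h \<and> norm (g z - z) = 2^n * c" for n
  proof (induction n)
    case 0 then show ?case using P0 by (auto simp: c_def)
  next
    case (Suc n)
    then obtain g h where "P g h" "norm (g z - z) = 2^n * c" by blast
    note st = step[OF \<open>P g h\<close>]
    have "norm (\<psi> (h (\<psi> (g z))) - z) = 2^(Suc n) * c"
      using st \<open>norm (g z - z) = 2^n * c\<close> by simp
    then show ?case using st by blast
  qed
  have bound: "2^n * c \<le> d" for n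
  proof -
    obtain g h where "P g h" "norm (g z - z) = 2^n * c" using all by blast
    then have "g z \<in> S" using zS unfolding P_def by blast
    then show ?thesis using diam[OF _ zS] \<open>norm (g z - z) = 2^n * c\<close> by metis
  qed
  have c0: "c = 0"
  proof (rule ccontr)
    assume "c \<noteq> 0"
    then have cp: "c > 0" by (simp add: c_def)
    obtain n where "d / c < 2^n" using real_arch_pow[of 2 "d/c"] by auto
    then have "d < 2^n * c" using cp by (simp add: field_simps)
    then show False using bound[of n] by simp
  qed
  then have "\<phi> z = z" by (simp add: c_def)
  then have "T (\<phi> z) = T z" by simp
  moreover have "T (\<phi> z) = \<psi>' (T z)" unfolding \<phi>_def using Ti1 S'U TS psi'S zS by blast
  ultimately have "T x + T y - T z = T z" by (simp add: \<psi>'_def)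
  then have "T x + T y = 2 *\<^sub>R T z" by (simp add: scaleR_2 algebra_simps)
  then show ?thesis by simp
qed



lemma l1: fixes f v :: "'a::real_vector" assumes "c = (1/2) * (a + b)"
  shows "f + c *\<^sub>R v = (1/2::real) *\<^sub>R ((f + a *\<^sub>R v) + (f + b *\<^sub>R v))"
proof -
  have "(1/2::real) *\<^sub>R ((f + a *\<^sub>R v) + (f + b *\<^sub>R v)) = (1/2::real) *\<^sub>R (2 *\<^sub>R f + (a + b) *\<^sub>R v)"
    by (simp add: scaleR_2 scaleR_add_left algebra_simps)
  also have "\<dots> = f + c *\<^sub>R v" using assms by (simp add: scaleR_add_right)
  finally show ?thesis by simp
qed
lemma l2: fixes f v :: "'a::real_vector"
  shows "(f + a *\<^sub>R v) - (f + b *\<^sub>R v) = (a - b) *\<^sub>R v"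
  by (simp add: scaleR_diff_left)
lemma l3: fixes A D :: "'a::real_vector"
  shows "2 *\<^sub>R (A + real (k+1) *\<^sub>R D) - (A + real k *\<^sub>R D) = A + real (k+2) *\<^sub>R D"
proof -
  have "2 *\<^sub>R (A + real (k+1) *\<^sub>R D) = 2 *\<^sub>R A + (2 * real (k+1)) *\<^sub>R D" by (simp add: scaleR_add_right)
  moreover have "(2 * real (k+1)) = real k + real (k+2)" by simp
  ultimately show ?thesis by (simp add: scaleR_add_left scaleR_2)
qed
lemma l4: fixes A B C :: "'a::real_vector"
  assumes "B = (1/2::real) *\<^sub>R (A + C)" shows "C = 2 *\<^sub>R B - A"
  using assms by (simp add: scaleR_2)

theorem lemma2p1:
  fixes U1 :: "'a::real_normed_vector set" and U2 :: "'b::real_normed_vector set"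
    and T :: "'a \<Rightarrow> 'b" and f g :: 'a
  assumes "open U1" "U1 \<noteq> {}" "open U2" "U2 \<noteq> {}"
    and "\<forall>u\<in>U1. \<forall>v\<in>U1. norm (T u - T v) = norm (u - v)"
    and "T ` U1 = U2"
    and "f \<in> U1" "g \<in> U1"
    and "\<forall>r::real. 0 \<le> r \<and> r \<le> 1 \<longrightarrow> (1 - r) *\<^sub>R f + r *\<^sub>R g \<in> U1"
  shows "T ((1/2::real) *\<^sub>R (f + g)) = (1/2::real) *\<^sub>R (T f + T g)"
proof -
  note iso = assms(5) and surj = assms(6)
  define p where "p = (\<lambda>t::real. f + t *\<^sub>R (g - f))"
  define K where "K = p ` {0..1}"
  have pcont: "continuous_on {0..1} p" unfolding p_def by (intro continuous_intros)
  have cK: "compact K" unfolding K_def by (rule compact_continuous_image[OF pcont compact_Icc])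
  have pU: "p t \<in> U1" if "0 \<le> t" "t \<le> 1" for t
  proof -
    have "p t = (1 - t) *\<^sub>R f + t *\<^sub>R g" by (simp add: p_def algebra_simps)
    then show ?thesis using assms(9) that by simp
  qed
  have KU: "K \<subseteq> U1" using pU by (auto simp: K_def)
  have Tc: "continuous_on K T"
    unfolding continuous_on_iff
  proof (intro ballI allI impI)
    fix x e assume x: "x \<in> K" and e: "(0::real) < e"
    show "\<exists>d>0. \<forall>x'\<in>K. dist x' x < d \<longrightarrow> dist (T x') (T x) < e"
    proof (intro exI[of _ e] conjI ballI impI)
      fix x' assume "x' \<in> K" "dist x' x < e"
      moreover have "x' \<in> U1" "x \<in> U1" using KU x \<open>x' \<in> K\<close> by auto
      ultimately show "dist (T x') (T x) < e" using iso by (simp add: dist_norm)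
    qed (rule e)
  qed
  have cTK: "compact (T ` K)" by (rule compact_continuous_image[OF Tc cK])
  have TKU: "T ` K \<subseteq> U2" using KU surj by auto
  obtain e1 where e1: "e1 > 0" "(\<Union>x\<in>K. cball x e1) \<subseteq> U1"
    using compact_subset_open_imp_cball_epsilon_subset[OF cK assms(1) KU] by blast
  obtain e2 where e2: "e2 > 0" "(\<Union>x\<in>T ` K. cball x e2) \<subseteq> U2"
    using compact_subset_open_imp_cball_epsilon_subset[OF cTK assms(3) TKU] by blast
  define e where "e = min e1 e2"
  have e: "e > 0" "e \<le> e1" "e \<le> e2" using e1 e2 by (auto simp: e_def)
  define L where "L = norm (g - f)"
  obtain n :: nat where n: "L / e < real n" using reals_Archimedean2 by blast
  have L0: "L \<ge> 0" by (simp add: L_def)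
  have n1: "n \<ge> 1" using n L0 e by (metis divide_nonneg_pos not_less less_one of_nat_0 of_nat_le_0_iff)
  have Ln: "L / real n < e" using n e n1 by (simp add: field_simps)
  define M where "M = 2 * n"
  have Mpos: "real M > 0" using n1 by (simp add: M_def)
  define q where "q = (\<lambda>k::nat. p (real k / real M))"
  have qK: "k \<le> M \<Longrightarrow> q k \<in> K" for k
    unfolding q_def K_def using Mpos by (intro imageI) (auto simp: field_simps)
  have mid: "T (q (k+1)) = (1/2::real) *\<^sub>R (T (q k) + T (q (k+2)))" if k: "k + 2 \<le> M" for k
  proof (rule local_mid[OF iso surj])
    have "real (k+1) / real M = (1/2) * (real k / real M + real (k+2) / real M)"
      using Mpos by (simp add: field_simps)
    then show "q (k+1) = (1/2::real) *\<^sub>R (q k + q (k+2))"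
      unfolding q_def p_def by (rule l1)
    have "q k - q (k+2) = (real k / real M - real (k+2) / real M) *\<^sub>R (g - f)"
      unfolding q_def p_def by (rule l2)
    also have "real k / real M - real (k+2) / real M = - (2 / real M)"
      using Mpos by (simp add: field_simps)
    finally have "norm (q k - q (k+2)) = 2 / real M * L" using Mpos by (simp add: L_def)
    also have "\<dots> = L / real n" by (simp add: M_def)
    finally have d: "norm (q k - q (k+2)) < e" using Ln by simp
    have zK: "q (k+1) \<in> K" using qK k by simp
    show "cball (q (k+1)) (norm (q k - q (k+2)) / 2) \<subseteq> U1"
    proof -
      have "cball (q (k+1)) (norm (q k - q (k+2)) / 2) \<subseteq> cball (q (k+1)) e1"
        using d e by (intro subset_cball) auto
      also have "\<dots> \<subseteq> U1" using e1 zK by blast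
      finally show ?thesis .
    qed
    show "cball (T (q (k+1))) (norm (q k - q (k+2))) \<subseteq> U2"
    proof -
      have "cball (T (q (k+1))) (norm (q k - q (k+2))) \<subseteq> cball (T (q (k+1))) e2"
        using d e by (intro subset_cball) auto
      also have "\<dots> \<subseteq> U2" using e2 zK by blast
      finally show ?thesis .
    qed
  qed
  define D where "D = T (q 1) - T (q 0)"
  have ap: "k + 1 \<le> M \<longrightarrow> T (q k) = T (q 0) + real k *\<^sub>R D \<and> T (q (k+1)) = T (q 0) + real (k+1) *\<^sub>R D" for k
  proof (induction k)
    case 0 then show ?case by (simp add: D_def)
  next
    case (Suc k)
    show ?case
    proof
      assume k: "Suc k + 1 \<le> M"
      then have IH: "T (q k) = T (q 0) + real k *\<^sub>R D" "T (q (k+1)) = T (q 0) + real (k+1) *\<^sub>R D"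
        using Suc by auto
      have m: "T (q (k+1)) = (1/2::real) *\<^sub>R (T (q k) + T (q (k+2)))" using mid k by simp
      then have "T (q (k+2)) = 2 *\<^sub>R T (q (k+1)) - T (q k)"
        by (rule l4)
      also have "\<dots> = T (q 0) + real (k+2) *\<^sub>R D" unfolding IH
        by (rule l3)
      finally show "T (q (Suc k)) = T (q 0) + real (Suc k) *\<^sub>R D \<and> T (q (Suc k + 1)) = T (q 0) + real (Suc k + 1) *\<^sub>R D"
        using IH by simp
    qed
  qed
  have q0: "q 0 = f" by (simp add: q_def p_def)
  have qM: "q M = g" using Mpos by (simp add: q_def p_def)
  have qn: "q n = (1/2::real) *\<^sub>R (f + g)"
  proof -
    have "real n / real M = 1/2" using n1 by (simp add: M_def)
    then show ?thesis by (simp add: q_def p_def algebra_simps)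
  qed
  have TM: "T g = T f + real M *\<^sub>R D" using ap[of "M - 1"] n1 q0 qM by (simp add: M_def)
  have Tn: "T ((1/2::real) *\<^sub>R (f + g)) = T f + real n *\<^sub>R D" using ap[of n] n1 q0 qn by (simp add: M_def)
  have "(1/2::real) *\<^sub>R (T f + T g) = T f + ((1/2) * real M) *\<^sub>R D"
    unfolding TM by (simp add: algebra_simps)
  also have "(1/2) * real M = real n" by (simp add: M_def)
  finally show ?thesis using Tn by simp
qed

end
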